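(* Let $d\ge 1$, let $\Omega=\operatorname{diag}(\omega_j)_{j=1}^d\in\mathbb{R}^{d\times d}$ with all $\omega_j\ge 0$, and let $A\in\mathbb{C}^{d\times d}$ be self-adjoint. Let $0<h\le 1$ and let $\psi_1,\phi\colon\mathbb{R}\to\mathbb{R}$ be even functions satisfying \[ \psi_1(\xi)=\operatorname{sinc}(\xi)\,\phi(\xi)\qquad\text{for all }\xi\in\mathbb{R}. \] Set $\Psi_1=\psi_1(h\Omega)$, $\Phi=\phi(h\Omega)$. For given $q_0,\dot q_0\in\mathbb{C}^d$, define $(q_n,\dot q_n)_{n\ge 0}$ recursively by \begin{align*} q_{n+1} &= \cos(h\Omega) q_n + h\operatorname{sinc}(h\Omega) \dot{q}_n - \tfrac12 h^2 \operatorname{sinc}(h\Omega) \Psi_1 A\Phi q_n,\\ \dot{q}_{n+1} &= -\Omega \sin(h\Omega) q_n + \cos(h\Omega) \dot{q}_n - \tfrac12 h \big( \cos(h\Omega) \Psi_1 A\Phi q_n + \Psi_1 A\Phi q_{n+1}\big). \end{align*} Define \[ \mathcal{H}(q,\dot{q}) = \tfrac12 \|\Omega q\|^2 + \tfrac12 \|\dot{q}\|^2 + \tfrac12 \operatorname{Re}\big((\cos(h\Omega) \Phi q)^* A \Phi q\big) - \tfrac18 h^2 \|\Psi_1 A \Phi q\|^2 . \] Then $\mathcal{H}(q_{n+1},\dot q_{n+1})=\mathcal{H}(q_n,\dot q_n)$ for all $n\ge 0$.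
   Context: $\|\cdot\|$ is the Euclidean norm on $\mathbb{C}^d$ and ${}^*$ denotes conjugate transpose. $\operatorname{sinc}(\xi)=\sin(\xi)/\xi$ for $\xi\ne0$ and $\operatorname{sinc}(0)=1$. For a function $f\colon\mathbb{R}\to\mathbb{R}$, $f(h\Omega)$ denotes the diagonal matrix $\operatorname{diag}(f(h\omega_j))_{j=1}^d$; in particular $\cos(h\Omega),\sin(h\Omega),\operatorname{sinc}(h\Omega)$ are diagonal matrices. The recursion is a trigonometric integrator for $\ddot q=-\Omega^2q-Aq$. *)

theory Defs
  imports "HOL-Analysis.Analysis"
begin

definition sinc :: "real \<Rightarrow> real" where
  "sinc x = (if x = 0 then 1 else sin x / x)"

definition diagm :: "('n::finite \<Rightarrow> real) \<Rightarrow> complex^'n^'n" where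
  "diagm w = (\<chi> i j. if i = j then complex_of_real (w i) else 0)"

text \<open>f(h \<Omega>) for \<Omega> = diag(\<omega>_j): the diagonal matrix diag(f(h \<omega>_j)).\<close>
definition fun_diag :: "(real \<Rightarrow> real) \<Rightarrow> real \<Rightarrow> ('n::finite \<Rightarrow> real) \<Rightarrow> complex^'n^'n" where
  "fun_diag f h \<omega> = diagm (\<lambda>j. f (h * \<omega> j))"

definition cdot :: "complex^'n::finite \<Rightarrow> complex^'n \<Rightarrow> complex" where
  "cdot x y = (\<Sum>i\<in>UNIV. cnj (x $ i) * y $ i)"

definition self_adjoint_mat :: "complex^'n::finite^'n \<Rightarrow> bool" where
  "self_adjoint_mat A \<longleftrightarrow> (\<forall>i j. A $ i $ j = cnj (A $ j $ i))"

definition Hmod :: "('n::finite \<Rightarrow> real) \<Rightarrow> complex^'n^'n \<Rightarrow> (real \<Rightarrow> real) \<Rightarrow> (real \<Rightarrow> real)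
    \<Rightarrow> real \<Rightarrow> complex^'n \<Rightarrow> complex^'n \<Rightarrow> real" where
  "Hmod \<omega> A psi1 phi h q qd =
     (let Om = diagm \<omega>; Psi1 = fun_diag psi1 h \<omega>; Phi = fun_diag phi h \<omega>; C = fun_diag cos h \<omega> in
      1/2 * (norm (Om *v q))^2 + 1/2 * (norm qd)^2
      + 1/2 * Re (cdot (C *v (Phi *v q)) (A *v (Phi *v q)))
      - 1/8 * h^2 * (norm (Psi1 *v (A *v (Phi *v q))))^2)"

end

theory Submission
  imports Defs
begin

definition R :: "complex^'n::finite \<Rightarrow> complex^'n \<Rightarrow> real" where
  "R x y = Re (cdot x y)"

lemma diagm_comp[simp]: "(diagm e *v x) $ i = complex_of_real (e i) * x $ i"
  unfolding diagm_def matrix_vector_mult_def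
  by (simp add: if_distrib[where f="\<lambda>z. z * _"] cong: if_cong)

lemma R_add_left: "R (x + y) z = R x z + R y z"
  by (simp add: R_def cdot_def algebra_simps sum.distrib)
lemma R_add_right: "R z (x + y) = R z x + R z y"
  by (simp add: R_def cdot_def algebra_simps sum.distrib)
lemma R_diff_left: "R (x - y) z = R x z - R y z"
  by (simp add: R_def cdot_def algebra_simps sum_subtractf)
lemma R_diff_right: "R z (x - y) = R z x - R z y"
  by (simp add: R_def cdot_def algebra_simps sum_subtractf)
lemma R_scale_left: "R (r *\<^sub>R x) z = r * R x z"
  unfolding R_def cdot_def vector_scaleR_component
  by (simp add: scaleR_conv_of_real sum_distrib_left algebra_simps)
lemma R_scale_right: "R z (r *\<^sub>R x) = r * R z x"
  unfolding R_def cdot_def vector_scaleR_component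
  by (simp add: scaleR_conv_of_real sum_distrib_left algebra_simps)
lemma R_sym: "R x y = R y x"
  unfolding R_def cdot_def
  by (simp add: mult.commute)
lemma R_diag: "R (diagm e *v x) y = R x (diagm e *v y)"
  unfolding R_def cdot_def by (simp add: algebra_simps)
lemma sc_comp: "((r::real) *\<^sub>R (x::complex^'n::finite)) $ i = complex_of_real r * x $ i"
  unfolding vector_scaleR_component by (simp add: scaleR_conv_of_real)

lemma N_sum: "(norm x)^2 = (\<Sum>i\<in>UNIV. (cmod (x$i))^2)"
  by (simp add: norm_vec_def L2_set_def sum_nonneg)

lemma R_norm: "(norm x)^2 = R x x"
proof -
  have "(norm x)^2 = (\<Sum>i\<in>UNIV. (cmod (x$i))^2)"
    by (simp add: norm_vec_def L2_set_def sum_nonneg)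
  also have "\<dots> = R x x" unfolding R_def cdot_def Re_sum
    by (intro sum.cong refl) (metis Re_complex_of_real complex_norm_square mult.commute)
  finally show ?thesis .
qed

lemma cdot_A:
  assumes "self_adjoint_mat A"
  shows "cdot x (A *v y) = cdot (A *v x) y"
proof -
  have "cdot (A *v x) y = (\<Sum>i\<in>UNIV. \<Sum>j\<in>UNIV. cnj (A$i$j) * cnj (x$j) * y$i)"
    unfolding cdot_def matrix_vector_mult_def by (simp add: cnj_sum sum_distrib_right)
  also have "\<dots> = (\<Sum>i\<in>UNIV. \<Sum>j\<in>UNIV. A$j$i * cnj (x$j) * y$i)"
  proof -
    have "cnj (A$i$j) = A$j$i" for i j
      using assms unfolding self_adjoint_mat_def by (metis complex_cnj_cnj)
    then show ?thesis by simp
  qed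
  also have "\<dots> = (\<Sum>j\<in>UNIV. \<Sum>i\<in>UNIV. A$j$i * cnj (x$j) * y$i)"
    by (rule sum.swap)
  also have "\<dots> = cdot x (A *v y)"
    unfolding cdot_def matrix_vector_mult_def by (simp add: sum_distrib_left algebra_simps)
  finally show ?thesis by simp
qed

lemma R_A:
  assumes "self_adjoint_mat A"
  shows "R x (A *v y) = R y (A *v x)"
  using cdot_A[OF assms] R_sym unfolding R_def by metis

lemma rot:
  fixes a b :: complex and c s :: real
  assumes "c^2 + s^2 = 1"
  shows "(cmod (of_real c * a + of_real s * b))^2 + (cmod (- (of_real s * a) + of_real c * b))^2
         = (cmod a)^2 + (cmod b)^2"
proof -
  have "(cmod (of_real c * a + of_real s * b))^2 + (cmod (- (of_real s * a) + of_real c * b))^2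
     = (c^2 + s^2) * ((Re a)^2 + (Im a)^2 + (Re b)^2 + (Im b)^2)"
    unfolding cmod_power2 by (simp add: algebra_simps power2_eq_square)
  also have "\<dots> = (cmod a)^2 + (cmod b)^2" using assms by (simp add: cmod_power2)
  finally show ?thesis .
qed

lemma sinc_mult: "x * sinc x = sin x"
  by (simp add: sinc_def)


theorem theorem1:
  fixes \<omega> :: "'n::finite \<Rightarrow> real"
    and A :: "complex^'n^'n"
    and h :: real
    and psi1 phi :: "real \<Rightarrow> real"
    and q qd :: "nat \<Rightarrow> complex^'n"
  assumes omega_nonneg: "\<forall>j. \<omega> j \<ge> 0"
    and A_sa: "self_adjoint_mat A"
    and h_pos: "0 < h" and h_le: "h \<le> 1"
    and psi1_even: "\<forall>x. psi1 (- x) = psi1 x"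
    and phi_even: "\<forall>x. phi (- x) = phi x"
    and psi1_phi: "\<forall>x. psi1 x = sinc x * phi x"
    and q_step: "\<forall>n. q (Suc n) =
        fun_diag cos h \<omega> *v q n + h *\<^sub>R (fun_diag sinc h \<omega> *v qd n)
        - (1/2 * h^2) *\<^sub>R (fun_diag sinc h \<omega> *v (fun_diag psi1 h \<omega> *v (A *v (fun_diag phi h \<omega> *v q n))))"
    and qd_step: "\<forall>n. qd (Suc n) =
        - (diagm \<omega> *v (fun_diag sin h \<omega> *v q n)) + fun_diag cos h \<omega> *v qd n
        - (1/2 * h) *\<^sub>R (fun_diag cos h \<omega> *v (fun_diag psi1 h \<omega> *v (A *v (fun_diag phi h \<omega> *v q n)))
                         + fun_diag psi1 h \<omega> *v (A *v (fun_diag phi h \<omega> *v q (Suc n))))"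
  shows "\<forall>n. Hmod \<omega> A psi1 phi h (q (Suc n)) (qd (Suc n)) = Hmod \<omega> A psi1 phi h (q n) (qd n)"
proof
  fix n
  define c where "c = (\<lambda>j. cos (h * \<omega> j))"
  define s where "s = (\<lambda>j. sin (h * \<omega> j))"
  define sg where "sg = (\<lambda>j. sinc (h * \<omega> j))"
  define ph where "ph = (\<lambda>j. phi (h * \<omega> j))"
  define ps where "ps = (\<lambda>j. psi1 (h * \<omega> j))"
  define Q where "Q = q n"
  define V where "V = qd n"
  define Q' where "Q' = q (Suc n)"
  define V' where "V' = qd (Suc n)"
  define u where "u = diagm ph *v Q"
  define u' where "u' = diagm ph *v Q'"
  define a where "a = A *v u"
  define a' where "a' = A *v u'"
  define g where "g = diagm ps *v a"
  define g' where "g' = diagm ps *v a'"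
  define v where "v = V - (h/2) *\<^sub>R g"
  define w where "w = V' + (h/2) *\<^sub>R g'"
  define hsp where "hsp = (\<lambda>j. h * sg j * ph j)"
  have ps_eq: "ps j = sg j * ph j" for j using psi1_phi by (simp add: ps_def sg_def ph_def)
  have hs: "h * \<omega> j * sg j = s j" for j
    using sinc_mult[of "h * \<omega> j"] by (simp add: sg_def s_def mult.assoc)
  have cs: "(c j)^2 + (s j)^2 = 1" for j by (simp add: c_def s_def)
  have qs: "Q' = diagm c *v Q + h *\<^sub>R (diagm sg *v V) - (1/2 * h^2) *\<^sub>R (diagm sg *v g)"
    using q_step unfolding Q'_def Q_def V_def g_def a_def u_def fun_diag_def c_def sg_def ps_def ph_def
    by simp
  have vs: "V' = - (diagm \<omega> *v (diagm s *v Q)) + diagm c *v V - (1/2 * h) *\<^sub>R (diagm c *v g + g')"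
    using qd_step unfolding V'_def Q'_def Q_def V_def g_def a_def u_def g'_def a'_def u'_def
      fun_diag_def c_def s_def ps_def ph_def
    by simp
  have F1: "u' = diagm c *v u + diagm hsp *v v"
    unfolding vec_eq_iff
  proof
    fix i
    show "u' $ i = (diagm c *v u + diagm hsp *v v) $ i"
      unfolding u'_def u_def v_def hsp_def qs
      by (simp add: power2_eq_square algebra_simps sc_comp scaleR_conv_of_real[where 'a=complex])
  qed
  have F2: "diagm hsp *v w = diagm c *v u' - u"
    unfolding vec_eq_iff
  proof
    fix i
    have e1: "w $ i = - (of_real (\<omega> i) * (of_real (s i) * Q $ i)) + of_real (c i) * v $ i"
      unfolding w_def vs v_def by (simp add: algebra_simps sc_comp scaleR_conv_of_real[where 'a=complex])
    have e2: "of_real (hsp i) * v $ i = u' $ i - of_real (c i) * u $ i"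
      using F1 by (simp add: vec_eq_iff)
    have e3: "of_real (hsp i) * of_real (\<omega> i) = (of_real (s i * ph i) :: complex)"
      using hs[of i] unfolding hsp_def by (simp add: algebra_simps flip: of_real_mult)
    have e4: "(of_real (c i))^2 = (1 - (of_real (s i))^2 :: complex)"
      using cs[of i] by (simp add: eq_diff_eq flip: of_real_power of_real_add)
    have "(diagm hsp *v w) $ i = - (of_real (hsp i) * of_real (\<omega> i)) * of_real (s i) * Q $ i
            + of_real (c i) * (of_real (hsp i) * v $ i)"
      by (simp add: e1 algebra_simps)
    also have "\<dots> = - of_real (s i * ph i) * of_real (s i) * Q $ i
            + of_real (c i) * (u' $ i - of_real (c i) * u $ i)"
      by (simp only: e2 e3)
    also have "\<dots> = of_real (c i) * u' $ i - ((of_real (c i))^2 + (of_real (s i))^2) * u $ i"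
      by (simp add: u_def algebra_simps power2_eq_square)
    also have "\<dots> = (diagm c *v u' - u) $ i"
      by (simp add: e4)
    finally show "(diagm hsp *v w) $ i = (diagm c *v u' - u) $ i" .
  qed
  have F3: "(norm (diagm \<omega> *v Q'))^2 + (norm w)^2 = (norm (diagm \<omega> *v Q))^2 + (norm v)^2"
  proof -
    have "(cmod ((diagm \<omega> *v Q') $ i))^2 + (cmod (w $ i))^2
        = (cmod ((diagm \<omega> *v Q) $ i))^2 + (cmod (v $ i))^2" for i
    proof -
      have hs': "of_real (\<omega> i) * (of_real h * of_real (sg i)) = (of_real (s i) :: complex)"
        using hs[of i] by (simp add: algebra_simps flip: of_real_mult)
      have x1: "(diagm \<omega> *v Q') $ i = of_real (c i) * ((diagm \<omega> *v Q) $ i) + of_real (s i) * v $ i"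
      proof -
        have "(diagm \<omega> *v Q') $ i = of_real (c i) * ((diagm \<omega> *v Q) $ i)
              + (of_real (\<omega> i) * (of_real h * of_real (sg i))) * v $ i"
          unfolding qs v_def by (simp add: power2_eq_square algebra_simps sc_comp scaleR_conv_of_real[where 'a=complex])
        then show ?thesis by (simp only: hs')
      qed
      have x2: "w $ i = - (of_real (s i) * ((diagm \<omega> *v Q) $ i)) + of_real (c i) * v $ i"
        unfolding w_def vs v_def by (simp add: algebra_simps sc_comp scaleR_conv_of_real[where 'a=complex])
      show ?thesis unfolding x1 x2 by (rule rot[OF cs])
    qed
    then show ?thesis unfolding N_sum by (simp add: sum.distrib[symmetric])
  qed
  have Hn: "Hmod \<omega> A psi1 phi h Q V = 1/2 * R (diagm \<omega> *v Q) (diagm \<omega> *v Q) + 1/2 * R V V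
     + 1/2 * R (diagm c *v u) a - 1/8 * h^2 * R g g"
    unfolding Hmod_def Let_def fun_diag_def R_norm
    by (simp add: R_def c_def ph_def ps_def u_def a_def g_def)
  have Hs: "Hmod \<omega> A psi1 phi h Q' V' = 1/2 * R (diagm \<omega> *v Q') (diagm \<omega> *v Q') + 1/2 * R V' V'
     + 1/2 * R (diagm c *v u') a' - 1/8 * h^2 * R g' g'"
    unfolding Hmod_def Let_def fun_diag_def R_norm
    by (simp add: R_def c_def ph_def ps_def u'_def a'_def g'_def)
  have G1: "h * R v g = R (u' - diagm c *v u) a"
  proof -
    have "h * R v g = R (diagm hsp *v v) a"
      unfolding g_def R_diag[symmetric] R_def cdot_def
      by (simp add: hsp_def ps_eq sum_distrib_left algebra_simps)
    then show ?thesis using F1 by simp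
  qed
  have G2: "h * R w g' = R (diagm c *v u' - u) a'"
  proof -
    have "h * R w g' = R (diagm hsp *v w) a'"
      unfolding g'_def R_diag[symmetric] R_def cdot_def
      by (simp add: hsp_def ps_eq sum_distrib_left algebra_simps)
    then show ?thesis using F2 by simp
  qed
  have Nv: "R v v = R V V - h * R V g + h^2/4 * R g g"
    unfolding v_def by (simp add: R_diff_left R_diff_right R_scale_left R_scale_right R_sym[of g V]
       power2_eq_square algebra_simps)
  have Nw: "R w w = R V' V' + h * R V' g' + h^2/4 * R g' g'"
    unfolding w_def by (simp add: R_add_left R_add_right R_scale_left R_scale_right R_sym[of g' V']
       power2_eq_square algebra_simps)
  have Rv: "R v g = R V g - h/2 * R g g"
    unfolding v_def by (simp add: R_diff_left R_scale_left)
  have Rw: "R w g' = R V' g' + h/2 * R g' g'"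
    unfolding w_def by (simp add: R_add_left R_scale_left)
  have Ac: "R u a' = R u' a" unfolding a_def a'_def by (rule R_A[OF A_sa])
  have key: "R (diagm c *v u') a' - R (diagm c *v u) a = h * R v g + h * R w g'"
    unfolding G1 G2 R_diff_left using Ac by simp
  have F3': "R (diagm \<omega> *v Q') (diagm \<omega> *v Q') + R w w = R (diagm \<omega> *v Q) (diagm \<omega> *v Q) + R v v"
    using F3 by (simp add: R_norm)
  show "Hmod \<omega> A psi1 phi h (q (Suc n)) (qd (Suc n)) = Hmod \<omega> A psi1 phi h (q n) (qd n)"
  proof -
    have Rv': "h * R v g = h * R V g - h * h / 2 * R g g" unfolding Rv by (simp add: algebra_simps)
    have Rw': "h * R w g' = h * R V' g' + h * h / 2 * R g' g'" unfolding Rw by (simp add: algebra_simps)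
    have Nv': "R v v = R V V - h * R V g + h * h / 4 * R g g" using Nv by (simp add: power2_eq_square)
    have Nw': "R w w = R V' V' + h * R V' g' + h * h / 4 * R g' g'" using Nw by (simp add: power2_eq_square)
    show ?thesis unfolding Q_def[symmetric] V_def[symmetric] Q'_def[symmetric] V'_def[symmetric] Hn Hs power2_eq_square using F3' Nv' Nw' Rv' Rw' key by (simp add: algebra_simps)
  qed
qed

end
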